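(* Let $n, q$ be positive integers, let $\mathcal{A} = \langle V, V_0, V_1, E\rangle$ be an arena (over some set of colors $C$) with $n$ nodes, let $\preceq$ be any total preorder on $V$, and let $S_1$ be a $q$-state strategy of Player 0 in $\mathcal{A}$. Then there exists a chromatic $(qn+1)^n$-state strategy $S_2$ of Player 0 in $\mathcal{A}$ such that for every $v\in V$, \[\mathsf{col}(S_2, v) \subseteq \bigcup_{u\in V,\ v\preceq u} \mathsf{col}(S_1, u).\]
   Context: An arena over a set of colors $C$ is a tuple $\mathcal{A} = \langle V, V_0, V_1, E\rangle$ of finite sets with $V = V_0 \sqcup V_1$, $E \subseteq V \times C \times V$, and every node having at least one outgoing edge; for $e=(s,c,t)$ write $\mathsf{source}(e)=s$, $\mathsf{col}(e)=c$, $\mathsf{target}(e)=t$. A path is a nonempty finite or infinite sequence of edges $e_1e_2\ldots$ with $\mathsf{target}(e_i)=\mathsf{source}(e_{i+1})$; for each node $v$ there is also a $0$-length path $\lambda_v$ with source and target $v$. $\mathsf{col}$ extends letterwise to sequences of edges. A strategy of Player 0 is a function $S$ assigning to each finite path $p$ with $\mathsf{target}(p)\in V_0$ an edge $S(p)$ with $\mathsf{source}(S(p))=\mathsf{target}(p)$. A path $p=e_1e_2\ldots$ is consistent with $S$ if (when $\mathsf{source}(p)\in V_0$) $e_1=S(\lambda_{\mathsf{source}(p)})$ and for each $1\le i<|p|$ with $\mathsf{target}(e_i)\in V_0$ we have $e_{i+1}=S(e_1\ldots e_i)$. For $v\in V$, $\mathsf{col}(S,v)\subseteq C^\omega$ is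 the set of $\mathsf{col}(p)$ over all infinite paths $p$ from $v$ consistent with $S$. A memory structure is $\mathcal{M}=\langle M, m_{init},\delta\rangle$ with $M$ finite, $m_{init}\in M$, $\delta: M\times E\to M$ (extended to finite edge sequences in the usual way). $S$ is an $\mathcal{M}$-strategy if for all finite paths $p_1,p_2$ with $\mathsf{target}(p_1)=\mathsf{target}(p_2)\in V_0$, $\delta(m_{init},p_1)=\delta(m_{init},p_2)$ implies $S(p_1)=S(p_2)$. $\mathcal{M}$ is chromatic if there is $\sigma: M\times C\to M$ with $\delta(m,e)=\sigma(m,\mathsf{col}(e))$ for all $m,e$. A (chromatic) $q$-state strategy is an $\mathcal{M}$-strategy for some (chromatic) memory structure $\mathcal{M}$ with $|M|=q$. *)

theory Defs
  imports Main
begin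

type_synonym ('v,'c) edge = "'v \<times> 'c \<times> 'v"

definition esrc :: "('v,'c) edge \<Rightarrow> 'v" where "esrc e = fst e"
definition ecol :: "('v,'c) edge \<Rightarrow> 'c" where "ecol e = fst (snd e)"
definition etgt :: "('v,'c) edge \<Rightarrow> 'v" where "etgt e = snd (snd e)"

text \<open>Arena over colour type 'c (the colour set C is the type).\<close>
definition arena :: "'v set \<Rightarrow> 'v set \<Rightarrow> 'v set \<Rightarrow> ('v,'c) edge set \<Rightarrow> bool" where
  "arena V V0 V1 E \<longleftrightarrow> finite V \<and> finite E \<and> V = V0 \<union> V1 \<and> V0 \<inter> V1 = {}
     \<and> (\<forall>e\<in>E. esrc e \<in> V \<and> etgt e \<in> V)
     \<and> (\<forall>v\<in>V. \<exists>e\<in>E. esrc e = v)"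

text \<open>A finite path is a pair (source node, list of edges); (v, []) is the 0-length path at v.\<close>
definition fpath :: "'v set \<Rightarrow> ('v,'c) edge set \<Rightarrow> 'v \<times> ('v,'c) edge list \<Rightarrow> bool" where
  "fpath V E p \<longleftrightarrow> fst p \<in> V \<and>
     (snd p = [] \<or> (esrc (hd (snd p)) = fst p \<and> set (snd p) \<subseteq> E \<and>
        (\<forall>i. Suc i < length (snd p) \<longrightarrow> etgt (snd p ! i) = esrc (snd p ! Suc i))))"

definition ptgt :: "'v \<times> ('v,'c) edge list \<Rightarrow> 'v" where
  "ptgt p = (if snd p = [] then fst p else etgt (last (snd p)))"

definition strategy ::
  "'v set \<Rightarrow> 'v set \<Rightarrow> ('v,'c) edge set \<Rightarrow> ('v \<times> ('v,'c) edge list \<Rightarrow> ('v,'c) edge) \<Rightarrow> bool" where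
  "strategy V V0 E S \<longleftrightarrow> (\<forall>p. fpath V E p \<and> ptgt p \<in> V0 \<longrightarrow> S p \<in> E \<and> esrc (S p) = ptgt p)"

definition ipath :: "('v,'c) edge set \<Rightarrow> 'v \<Rightarrow> (nat \<Rightarrow> ('v,'c) edge) \<Rightarrow> bool" where
  "ipath E v w \<longleftrightarrow> esrc (w 0) = v \<and> (\<forall>i. w i \<in> E \<and> etgt (w i) = esrc (w (Suc i)))"

definition consistent ::
  "'v set \<Rightarrow> ('v \<times> ('v,'c) edge list \<Rightarrow> ('v,'c) edge) \<Rightarrow> 'v \<Rightarrow> (nat \<Rightarrow> ('v,'c) edge) \<Rightarrow> bool" where
  "consistent V0 S v w \<longleftrightarrow> (v \<in> V0 \<longrightarrow> w 0 = S (v, [])) \<and>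
     (\<forall>i. etgt (w i) \<in> V0 \<longrightarrow> w (Suc i) = S (v, map w [0..<Suc i]))"

definition cols ::
  "'v set \<Rightarrow> ('v,'c) edge set \<Rightarrow> ('v \<times> ('v,'c) edge list \<Rightarrow> ('v,'c) edge) \<Rightarrow> 'v \<Rightarrow> (nat \<Rightarrow> 'c) set" where
  "cols V0 E S v = {(\<lambda>i. ecol (w i)) | w. ipath E v w \<and> consistent V0 S v w}"

definition memory_structure :: "('v,'c) edge set \<Rightarrow> 'm set \<Rightarrow> 'm \<Rightarrow> ('m \<Rightarrow> ('v,'c) edge \<Rightarrow> 'm) \<Rightarrow> bool" where
  "memory_structure E M m0 \<delta> \<longleftrightarrow> finite M \<and> m0 \<in> M \<and> (\<forall>m\<in>M. \<forall>e\<in>E. \<delta> m e \<in> M)"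

definition delta_ext :: "('m \<Rightarrow> ('v,'c) edge \<Rightarrow> 'm) \<Rightarrow> 'm \<Rightarrow> ('v,'c) edge list \<Rightarrow> 'm" where
  "delta_ext \<delta> m es = fold (\<lambda>e m. \<delta> m e) es m"

definition mem_strategy ::
  "'v set \<Rightarrow> 'v set \<Rightarrow> ('v,'c) edge set \<Rightarrow> 'm \<Rightarrow> ('m \<Rightarrow> ('v,'c) edge \<Rightarrow> 'm)
     \<Rightarrow> ('v \<times> ('v,'c) edge list \<Rightarrow> ('v,'c) edge) \<Rightarrow> bool" where
  "mem_strategy V V0 E m0 \<delta> S \<longleftrightarrow> strategy V V0 E S \<and>
     (\<forall>p1 p2. fpath V E p1 \<and> fpath V E p2 \<and> ptgt p1 = ptgt p2 \<and> ptgt p1 \<in> V0 \<and>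
        delta_ext \<delta> m0 (snd p1) = delta_ext \<delta> m0 (snd p2) \<longrightarrow> S p1 = S p2)"

definition chromatic :: "('v,'c) edge set \<Rightarrow> 'm set \<Rightarrow> ('m \<Rightarrow> ('v,'c) edge \<Rightarrow> 'm) \<Rightarrow> bool" where
  "chromatic E M \<delta> \<longleftrightarrow> (\<exists>\<sigma>. \<forall>m\<in>M. \<forall>e\<in>E. \<delta> m e = \<sigma> m (ecol e))"

text \<open>q-state strategies; memory states are encoded as natural numbers (w.l.o.g.).\<close>
definition q_state_strategy ::
  "'v set \<Rightarrow> 'v set \<Rightarrow> ('v,'c) edge set \<Rightarrow> nat \<Rightarrow> ('v \<times> ('v,'c) edge list \<Rightarrow> ('v,'c) edge) \<Rightarrow> bool" where
  "q_state_strategy V V0 E q S \<longleftrightarrow> (\<exists>(M::nat set) m0 \<delta>. memory_structure E M m0 \<delta> \<and> card M = q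
      \<and> mem_strategy V V0 E m0 \<delta> S)"

definition chromatic_q_state_strategy ::
  "'v set \<Rightarrow> 'v set \<Rightarrow> ('v,'c) edge set \<Rightarrow> nat \<Rightarrow> ('v \<times> ('v,'c) edge list \<Rightarrow> ('v,'c) edge) \<Rightarrow> bool" where
  "chromatic_q_state_strategy V V0 E q S \<longleftrightarrow> (\<exists>(M::nat set) m0 \<delta>. memory_structure E M m0 \<delta> \<and> card M = q
      \<and> chromatic E M \<delta> \<and> mem_strategy V V0 E m0 \<delta> S)"

definition total_preorder_on :: "'v set \<Rightarrow> ('v \<times> 'v) set \<Rightarrow> bool" where
  "total_preorder_on V R \<longleftrightarrow> R \<subseteq> V \<times> V \<and> (\<forall>x\<in>V. (x,x) \<in> R) \<and>
     (\<forall>x y z. (x,y) \<in> R \<and> (y,z) \<in> R \<longrightarrow> (x,z) \<in> R) \<and>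
     (\<forall>x\<in>V. \<forall>y\<in>V. (x,y) \<in> R \<or> (y,x) \<in> R)"

end

theory Submission
  imports Defs "HOL-Library.FuncSet"
begin

primrec kseq :: "('a list \<Rightarrow> 'a) \<Rightarrow> nat \<Rightarrow> 'a list" where
  "kseq ch 0 = []"
| "kseq ch (Suc k) = kseq ch k @ [ch (kseq ch k)]"

lemma konig:
  assumes fin: "finite A"
    and ex: "\<And>k. \<exists>xs. length xs = k \<and> P xs"
    and pre: "\<And>xs ys. P (xs @ ys) \<Longrightarrow> P xs"
    and sub: "\<And>xs. P xs \<Longrightarrow> set xs \<subseteq> A"
  shows "\<exists>g. \<forall>k. P (map g [0..<k])"
proof -
  define good where "good xs \<longleftrightarrow> (\<forall>k. \<exists>ys. length ys = k \<and> P (xs @ ys))" for xs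
  have step: "\<exists>a\<in>A. good (xs @ [a])" if g: "good xs" for xs
  proof (rule ccontr)
    assume "\<not> (\<exists>a\<in>A. good (xs @ [a]))"
    then have "\<forall>a\<in>A. \<exists>k. \<forall>ys. length ys = k \<longrightarrow> \<not> P (xs @ [a] @ ys)"
      unfolding good_def by auto
    then obtain kf where kf: "\<And>a ys. a \<in> A \<Longrightarrow> length ys = kf a \<Longrightarrow> \<not> P (xs @ [a] @ ys)"
      by metis
    define K where "K = Max (kf ` A)"
    obtain ys where ys: "length ys = Suc K" "P (xs @ ys)" using g unfolding good_def by blast
    then obtain a ys' where ys': "ys = a # ys'" by (cases ys) auto
    have "set (xs @ ys) \<subseteq> A" using sub ys(2) .
    then have aA: "a \<in> A" using ys' by auto
    have "kf a \<le> K" unfolding K_def using fin aA by auto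
    then have len: "length (take (kf a) ys') = kf a" using ys ys' by auto
    have "P ((xs @ [a] @ take (kf a) ys') @ drop (kf a) ys')" using ys(2) ys' by simp
    then have "P (xs @ [a] @ take (kf a) ys')" using pre by blast
    then show False using kf[OF aA len] by blast
  qed
  define ch where "ch xs = (SOME a. a \<in> A \<and> good (xs @ [a]))" for xs
  have gk: "good (kseq ch k)" for k
  proof (induction k)
    case 0 then show ?case using ex unfolding good_def by simp
  next
    case (Suc k)
    then have "ch (kseq ch k) \<in> A \<and> good (kseq ch k @ [ch (kseq ch k)])"
      unfolding ch_def using step by (metis (mono_tags, lifting) someI_ex)
    then show ?case by simp
  qed
  define g where "g i = ch (kseq ch i)" for i
  have "kseq ch k = map g [0..<k]" for k by (induction k) (auto simp: g_def)
  moreover have "P (kseq ch k)" for k using gk[of k] unfolding good_def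
    by (metis append_Nil2 length_0_conv)
  ultimately show ?thesis by metis
qed

lemma ptgt_snoc[simp]: "ptgt (u, es @ [e]) = etgt e"
  by (simp add: ptgt_def)

lemma fpath_snoc:
  assumes "fpath V E (u, es)" "e \<in> E" "esrc e = ptgt (u, es)"
  shows "fpath V E (u, es @ [e])"
proof (cases "es = []")
  case True then show ?thesis using assms by (auto simp: fpath_def ptgt_def)
next
  case False
  have "etgt ((es @ [e]) ! i) = esrc ((es @ [e]) ! Suc i)" if "Suc i < length (es @ [e])" for i
  proof (cases "Suc i < length es")
    case True then show ?thesis using assms False by (auto simp: fpath_def nth_append)
  next
    case f2: False
    then have "Suc i = length es" using that by simp
    then have "es ! i = last es" using False by (metis diff_Suc_1 last_conv_nth)
    then show ?thesis using assms False \<open>Suc i = length es\<close> by (auto simp: ptgt_def nth_append)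
  qed
  then show ?thesis using assms False by (auto simp: fpath_def)
qed

lemma fpath_prefix:
  assumes "fpath V E (u, xs @ ys)"
  shows "fpath V E (u, xs)"
proof (cases "xs = []")
  case True then show ?thesis using assms by (simp add: fpath_def)
next
  case False
  have 1: "fst (u, xs) \<in> V" using assms by (simp add: fpath_def)
  have 2: "esrc (hd xs) = u \<and> set xs \<subseteq> E" using assms False by (auto simp: fpath_def)
  have 3: "etgt (xs ! i) = esrc (xs ! Suc i)" if "Suc i < length xs" for i
  proof -
    have "Suc i < length (xs @ ys)" using that by simp
    then have "etgt ((xs@ys) ! i) = esrc ((xs@ys) ! Suc i)" using assms False by (auto simp: fpath_def)
    then show ?thesis using that by (simp add: nth_append)
  qed
  show ?thesis using 1 2 3 by (simp add: fpath_def)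
qed

lemma fpath_ptgt_V:
  assumes "arena V V0 V1 E" "fpath V E p"
  shows "ptgt p \<in> V"
  using assms unfolding fpath_def arena_def ptgt_def
  by (metis last_in_set subsetD)


locale tctx =
  fixes V V0 V1 :: "'v set" and E :: "('v,'c) edge set" and R :: "('v \<times> 'v) set"
    and S1 :: "'v \<times> ('v,'c) edge list \<Rightarrow> ('v,'c) edge"
    and M1 :: "nat set" and m0 :: nat and d1 :: "nat \<Rightarrow> ('v,'c) edge \<Rightarrow> nat"
  assumes ar: "arena V V0 V1 E" and tp: "total_preorder_on V R"
    and ms: "memory_structure E M1 m0 d1" and mstr: "mem_strategy V V0 E m0 d1 S1"
begin

definition cons1 :: "'v \<Rightarrow> ('v,'c) edge list \<Rightarrow> bool" where
  "cons1 u es \<longleftrightarrow> fpath V E (u,es) \<and> (u \<in> V0 \<and> es \<noteq> [] \<longrightarrow> es!0 = S1 (u,[])) \<and>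
     (\<forall>i. Suc i < length es \<and> etgt (es!i) \<in> V0 \<longrightarrow> es!(Suc i) = S1 (u, take (Suc i) es))"

lemma cons1_prefix:
  assumes "cons1 u (xs @ ys)" shows "cons1 u xs"
proof -
  have "fpath V E (u, xs)" using assms fpath_prefix[of V E u xs ys] unfolding cons1_def by simp
  moreover have "u \<in> V0 \<and> xs \<noteq> [] \<longrightarrow> xs!0 = S1 (u,[])"
    using assms unfolding cons1_def by (auto simp: nth_append)
  moreover have "xs!(Suc i) = S1 (u, take (Suc i) xs)" if "Suc i < length xs" "etgt (xs!i) \<in> V0" for i
  proof -
    have A: "Suc i < length (xs@ys) \<and> etgt ((xs@ys)!i) \<in> V0 \<longrightarrow> (xs@ys)!(Suc i) = S1 (u, take (Suc i) (xs@ys))"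
      using assms unfolding cons1_def by blast
    then show ?thesis using that by (simp add: nth_append)
  qed
  ultimately show ?thesis unfolding cons1_def by blast
qed

lemma cons1_snoc:
  assumes "cons1 u es" "e \<in> E" "esrc e = ptgt (u, es)" "ptgt (u, es) \<in> V0 \<Longrightarrow> e = S1 (u, es)"
  shows "cons1 u (es @ [e])"
proof -
  have c: "fpath V E (u,es)" "u \<in> V0 \<and> es \<noteq> [] \<longrightarrow> es!0 = S1 (u,[])"
    "\<And>i. Suc i < length es \<and> etgt (es!i) \<in> V0 \<longrightarrow> es!(Suc i) = S1 (u, take (Suc i) es)"
    using assms(1) unfolding cons1_def by blast+
  have "fpath V E (u, es @ [e])" using fpath_snoc[OF c(1) assms(2,3)] .
  moreover have "u \<in> V0 \<and> es @ [e] \<noteq> [] \<longrightarrow> (es @ [e])!0 = S1 (u,[])"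
  proof (cases "es = []")
    case True then show ?thesis using assms(4) by (simp add: ptgt_def)
  next
    case False then show ?thesis using c(2) by (simp add: nth_append)
  qed
  moreover have "(es@[e])!(Suc i) = S1 (u, take (Suc i) (es@[e]))"
    if "Suc i < length (es@[e])" "etgt ((es@[e])!i) \<in> V0" for i
  proof (cases "Suc i < length es")
    case True
    then have "etgt (es!i) \<in> V0" using that by (simp add: nth_append)
    then have "es!(Suc i) = S1 (u, take (Suc i) es)" using c(3)[of i] True by blast
    then show ?thesis using True by (simp add: nth_append)
  next
    case False
    then have si: "Suc i = length es" using that by simp
    then have ne: "es \<noteq> []" by auto
    have "es ! i = last es" using si ne by (metis diff_Suc_1 last_conv_nth)
    then have "ptgt (u, es) \<in> V0" using that si ne by (auto simp: ptgt_def nth_append)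
    then show ?thesis using assms si by (simp add: nth_append)
  qed
  ultimately show ?thesis unfolding cons1_def by blast
qed

definition choice :: "'v \<Rightarrow> nat \<Rightarrow> ('v,'c) edge" where
  "choice x m = S1 (SOME p. fpath V E p \<and> ptgt p = x \<and> delta_ext d1 m0 (snd p) = m)"

lemma choice_eq:
  assumes "fpath V E (u, es)" "ptgt (u, es) = x" "x \<in> V0" "delta_ext d1 m0 es = m"
  shows "choice x m = S1 (u, es) \<and> S1 (u, es) \<in> E \<and> esrc (S1 (u, es)) = x"
proof -
  let ?p = "SOME p. fpath V E p \<and> ptgt p = x \<and> delta_ext d1 m0 (snd p) = m"
  have ex: "fpath V E (u, es) \<and> ptgt (u, es) = x \<and> delta_ext d1 m0 (snd (u, es)) = m"
    using assms by simp
  have sp: "fpath V E ?p \<and> ptgt ?p = x \<and> delta_ext d1 m0 (snd ?p) = m"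
    by (rule someI[of "\<lambda>p. fpath V E p \<and> ptgt p = x \<and> delta_ext d1 m0 (snd p) = m", OF ex])
  have M: "\<And>p1 p2. fpath V E p1 \<and> fpath V E p2 \<and> ptgt p1 = ptgt p2 \<and> ptgt p1 \<in> V0 \<and>
        delta_ext d1 m0 (snd p1) = delta_ext d1 m0 (snd p2) \<Longrightarrow> S1 p1 = S1 p2"
    using mstr unfolding mem_strategy_def by blast
  have St: "\<And>p. fpath V E p \<and> ptgt p \<in> V0 \<Longrightarrow> S1 p \<in> E \<and> esrc (S1 p) = ptgt p"
    using mstr unfolding mem_strategy_def strategy_def by blast
  have "S1 ?p = S1 (u, es)" using sp assms by (intro M) simp
  moreover have "S1 (u, es) \<in> E \<and> esrc (S1 (u, es)) = x"
    using St[of "(u,es)"] assms by simp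
  ultimately show ?thesis unfolding choice_def by simp
qed

definition cand :: "('v \<Rightarrow> ('v \<times> nat) option) \<Rightarrow> 'c \<Rightarrow> 'v \<Rightarrow> ('v \<times> nat) set" where
  "cand f c x' = {(u, d1 m e) | x u m e. x \<in> V \<and> u \<in> V \<and> m \<in> M1 \<and> f x = Some (u,m) \<and> e \<in> E \<and>
      esrc e = x \<and> ecol e = c \<and> etgt e = x' \<and> (x \<in> V0 \<longrightarrow> e = choice x m)}"

lemma cand_sub: "cand f c x' \<subseteq> V \<times> M1"
  using ms unfolding cand_def memory_structure_def by auto

lemma finM1: "finite M1" using ms unfolding memory_structure_def by auto
lemma finV: "finite V" using ar unfolding arena_def by auto

lemma max_ex:
  assumes "finite A" "A \<noteq> {}" "fst ` A \<subseteq> V"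
  shows "\<exists>p\<in>A. \<forall>p2\<in>A. (fst p2, fst p) \<in> R"
  using assms
proof (induction A rule: finite_ne_induct)
  case (singleton x)
  then show ?case using tp unfolding total_preorder_on_def by auto
next
  case (insert x F)
  then obtain p where p: "p \<in> F" "\<forall>p2\<in>F. (fst p2, fst p) \<in> R" by auto
  have xV: "fst x \<in> V" and pV: "fst p \<in> V" using insert p by auto
  show ?case
  proof (cases "(fst x, fst p) \<in> R")
    case True then show ?thesis using p by auto
  next
    case False
    then have "(fst p, fst x) \<in> R" using tp xV pV unfolding total_preorder_on_def by blast
    then have "\<forall>p2\<in>insert x F. (fst p2, fst x) \<in> R"
      using p tp xV unfolding total_preorder_on_def by blast
    then show ?thesis by blast
  qed
qed

definition pick :: "('v \<times> nat) set \<Rightarrow> 'v \<times> nat" where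
  "pick A = (SOME p. p \<in> A \<and> (\<forall>p2\<in>A. (fst p2, fst p) \<in> R))"

lemma pick:
  assumes "cand f c x' \<noteq> {}"
  shows "pick (cand f c x') \<in> cand f c x' \<and> (\<forall>p2\<in>cand f c x'. (fst p2, fst (pick (cand f c x'))) \<in> R)"
proof -
  have f1: "finite (cand f c x')" using cand_sub[of f c x'] finV finM1 by (meson finite_SigmaI finite_subset)
  have f2: "fst ` cand f c x' \<subseteq> V" using cand_sub[of f c x'] by auto
  have "\<exists>p\<in>cand f c x'. \<forall>p2\<in>cand f c x'. (fst p2, fst p) \<in> R"
    by (rule max_ex[OF f1 assms f2])
  then have "\<exists>p. p \<in> cand f c x' \<and> (\<forall>p2\<in>cand f c x'. (fst p2, fst p) \<in> R)" by blast
  from someI_ex[OF this] show ?thesis unfolding pick_def .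
qed

definition upd :: "('v \<Rightarrow> ('v \<times> nat) option) \<Rightarrow> 'c \<Rightarrow> 'v \<Rightarrow> ('v \<times> nat) option" where
  "upd f c = (\<lambda>x'. if x' \<in> V then (if cand f c x' = {} then None else Some (pick (cand f c x'))) else undefined)"

definition f0 :: "'v \<Rightarrow> ('v \<times> nat) option" where
  "f0 = (\<lambda>x. if x \<in> V then Some (x, m0) else undefined)"

definition Fx :: "('v,'c) edge list \<Rightarrow> 'v \<Rightarrow> ('v \<times> nat) option" where
  "Fx es = fold (\<lambda>e f. upd f (ecol e)) es f0"

lemma Fx_snoc: "Fx (es @ [e]) = upd (Fx es) (ecol e)"
  by (simp add: Fx_def)

lemma Fx_Nil: "Fx [] = f0" by (simp add: Fx_def)

definition FS :: "('v \<Rightarrow> ('v \<times> nat) option) set" where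
  "FS = (V \<rightarrow>\<^sub>E ({None} \<union> Some ` (V \<times> M1)))"

lemma upd_FS: "upd f c \<in> FS"
proof -
  have "upd f c x \<in> {None} \<union> Some ` (V \<times> M1)" if "x \<in> V" for x
  proof (cases "cand f c x = {}")
    case False
    then have "pick (cand f c x) \<in> V \<times> M1" using pick cand_sub by blast
    then show ?thesis using that False unfolding upd_def by auto
  qed (use that in \<open>simp add: upd_def\<close>)
  moreover have "upd f c x = undefined" if "x \<notin> V" for x using that by (simp add: upd_def)
  ultimately show ?thesis unfolding FS_def by (rule PiE_I)
qed

lemma f0_FS: "f0 \<in> FS"
  unfolding FS_def f0_def using ms by (auto simp: memory_structure_def)

lemma Fx_FS: "Fx es \<in> FS"
proof (induction es rule: rev_induct)
  case Nil show ?case unfolding Fx_Nil by (rule f0_FS)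
next
  case (snoc e es) show ?case unfolding Fx_snoc by (rule upd_FS)
qed

lemma finFS: "finite FS"
proof -
  have "finite ({None} \<union> Some ` (V \<times> M1))" using finV finM1 by simp
  then show ?thesis unfolding FS_def using finV by (intro finite_PiE)
qed

lemma cardFS: "card FS = (card M1 * card V + 1) ^ card V"
proof -
  have fin: "finite (Some ` (V \<times> M1))" using finV finM1 by simp
  have "card ({None} \<union> Some ` (V \<times> M1)) = card (insert None (Some ` (V \<times> M1)))" by simp
  also have "\<dots> = Suc (card (Some ` (V \<times> M1)))" using fin by (subst card_insert_disjoint) auto
  also have "card (Some ` (V \<times> M1)) = card (V \<times> M1)" by (rule card_image) simp
  also have "\<dots> = card V * card M1" by (rule card_cartesian_product)
  finally have c: "card ({None} \<union> Some ` (V \<times> M1)) = card M1 * card V + 1" by simp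
  have "card FS = (\<Prod>i\<in>V. card ({None} \<union> Some ` (V \<times> M1)))"
    unfolding FS_def by (rule card_PiE[OF finV])
  also have "\<dots> = (card M1 * card V + 1) ^ card V" using c by simp
  finally show ?thesis .
qed

lemma Fx_inv:
  "x \<in> V \<Longrightarrow> Fx es x = Some (u,m) \<Longrightarrow> x \<in> V \<and> u \<in> V \<and> m \<in> M1 \<and>
     (\<exists>es'. cons1 u es' \<and> ptgt (u,es') = x \<and> delta_ext d1 m0 es' = m \<and> map ecol es' = map ecol es)"
proof (induction es arbitrary: x u m rule: rev_induct)
  case Nil
  then have "x \<in> V" "u = x" "m = m0" by (auto simp: Fx_Nil f0_def split: if_splits)
  moreover have "cons1 x []" using \<open>x \<in> V\<close> by (simp add: cons1_def fpath_def)
  ultimately show ?case using ms by (auto simp: memory_structure_def ptgt_def delta_ext_def intro!: exI[of _ "[]"])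
next
  case (snoc e es)
  let ?f = "Fx es"
  have xV: "x \<in> V" and nz: "cand ?f (ecol e) x \<noteq> {}" and pk: "pick (cand ?f (ecol e) x) = (u, m)" 
    using snoc.prems by (auto simp: Fx_snoc upd_def split: if_splits)
  have "(u, m) \<in> cand ?f (ecol e) x" using pick[OF nz] pk by simp
  then obtain x0 m1 e' where h: "x0 \<in> V" "u \<in> V" "m1 \<in> M1" "?f x0 = Some (u,m1)" "e' \<in> E"
    "esrc e' = x0" "ecol e' = ecol e" "etgt e' = x" "x0 \<in> V0 \<longrightarrow> e' = choice x0 m1" "m = d1 m1 e'"
    unfolding cand_def by blast
  obtain es' where es': "cons1 u es'" "ptgt (u,es') = x0" "delta_ext d1 m0 es' = m1" "map ecol es' = map ecol es"
    using snoc.IH[OF h(1) h(4)] by blast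
  have "cons1 u (es' @ [e'])"
  proof (rule cons1_snoc)
    show "cons1 u es'" "e' \<in> E" "esrc e' = ptgt (u, es')" using es' h by auto
    show "e' = S1 (u, es')" if "ptgt (u, es') \<in> V0"
      using choice_eq[of u es' x0 m1] es' h that unfolding cons1_def by auto
  qed
  moreover have "delta_ext d1 m0 (es' @ [e']) = m" using es' h by (simp add: delta_ext_def)
  moreover have "m \<in> M1" using ms h unfolding memory_structure_def by auto
  ultimately show ?case using xV h es' by (auto intro!: exI[of _ "es' @ [e']"])
qed

definition stratf :: "('v \<Rightarrow> ('v \<times> nat) option) \<Rightarrow> 'v \<Rightarrow> ('v,'c) edge" where
  "stratf f x = (case f x of None \<Rightarrow> (SOME e. e \<in> E \<and> esrc e = x) | Some um \<Rightarrow> choice x (snd um))"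

lemma stratf_ok:
  assumes "fpath V E p" "ptgt p \<in> V0"
  shows "stratf (Fx (snd p)) (ptgt p) \<in> E \<and> esrc (stratf (Fx (snd p)) (ptgt p)) = ptgt p"
proof -
  have xV: "ptgt p \<in> V" using fpath_ptgt_V[OF ar assms(1)] .
  show ?thesis
  proof (cases "Fx (snd p) (ptgt p)")
    case None
    have "\<exists>e. e \<in> E \<and> esrc e = ptgt p" using ar xV unfolding arena_def by blast
    then show ?thesis using None unfolding stratf_def by (metis (mono_tags, lifting) option.simps(4) someI_ex)
  next
    case (Some um)
    obtain u m where um: "um = (u, m)" by (cases um)
    obtain es' where es': "cons1 u es'" "ptgt (u,es') = ptgt p" "delta_ext d1 m0 es' = m"
      using Fx_inv[OF xV] Some um by blast
    have "choice (ptgt p) m = S1 (u, es') \<and> S1 (u, es') \<in> E \<and> esrc (S1 (u, es')) = ptgt p"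
      using choice_eq[of u es' "ptgt p" m] es' assms unfolding cons1_def by auto
    then show ?thesis using Some um unfolding stratf_def by simp
  qed
qed

lemma ptgt_map:
  assumes "ipath E v w" shows "ptgt (v, map w [0..<k]) = esrc (w k)"
proof (cases k)
  case 0 then show ?thesis using assms by (simp add: ptgt_def ipath_def)
next
  case (Suc i)
  then have "ptgt (v, map w [0..<k]) = etgt (w i)" by (simp add: ptgt_def)
  then show ?thesis using assms Suc unfolding ipath_def by simp
qed

lemma play:
  assumes vV: "v \<in> V" and ip: "ipath E v w"
    and co: "consistent V0 (\<lambda>p. stratf (Fx (snd p)) (ptgt p)) v w"
  shows "(\<lambda>i. ecol (w i)) \<in> (\<Union>u\<in>{u\<in>V. (v,u) \<in> R}. cols V0 E S1 u)"
proof -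
  have wE: "w i \<in> E" for i using ip unfolding ipath_def by auto
  have wV: "esrc (w i) \<in> V" "etgt (w i) \<in> V" for i using wE[of i] ar unfolding arena_def by auto
  have A: "\<exists>u m. Fx (map w [0..<k]) (esrc (w k)) = Some (u,m) \<and> (v,u) \<in> R" for k
  proof (induction k)
    case 0
    have "esrc (w 0) = v" using ip unfolding ipath_def by auto
    moreover have "(v,v) \<in> R" using tp vV unfolding total_preorder_on_def by blast
    ultimately show ?case using vV by (simp add: Fx_Nil f0_def)
  next
    case (Suc k)
    then obtain u m where um: "Fx (map w [0..<k]) (esrc (w k)) = Some (u,m)" "(v,u) \<in> R" by blast
    let ?x = "esrc (w k)" and ?e = "w k" and ?f = "Fx (map w [0..<k])"
    have inv: "u \<in> V" "m \<in> M1" using Fx_inv[OF wV(1) um(1)] by auto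
    have ch: "?e = choice ?x m" if "?x \<in> V0"
    proof -
      have "?e = stratf ?f (ptgt (v, map w [0..<k]))"
      proof (cases k)
        case 0
        have "esrc (w 0) = v" using ip unfolding ipath_def by simp
        moreover have "v \<in> V0 \<longrightarrow> w 0 = stratf (Fx (snd (v, []::('v,'c) edge list))) (ptgt (v, []::('v,'c) edge list))"
          using co unfolding consistent_def by (rule conjunct1)
        ultimately show ?thesis using that 0 by (simp add: ptgt_def)
      next
        case (Suc i)
        have "etgt (w i) = ?x" using ip Suc unfolding ipath_def by blast
        moreover have "etgt (w i) \<in> V0 \<longrightarrow> w (Suc i) = stratf (Fx (snd (v, map w [0..<Suc i]))) (ptgt (v, map w [0..<Suc i]))"
          using co unfolding consistent_def by (rule conjunct2[THEN spec[of _ i]])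
        ultimately show ?thesis using that Suc by simp
      qed
      then show ?thesis using um(1) ptgt_map[OF ip, of k] by (simp add: stratf_def)
    qed
    have x'eq: "etgt ?e = esrc (w (Suc k))" using ip unfolding ipath_def by blast
    have "(u, d1 m ?e) \<in> cand ?f (ecol ?e) (etgt ?e)"
      unfolding cand_def using wV inv um wE ch by blast
    then have ne: "cand ?f (ecol ?e) (etgt ?e) \<noteq> {}" by blast
    have "Fx (map w [0..<Suc k]) (etgt ?e) = Some (pick (cand ?f (ecol ?e) (etgt ?e)))"
      using ne wV by (simp add: Fx_snoc upd_def)
    moreover have "(u, fst (pick (cand ?f (ecol ?e) (etgt ?e)))) \<in> R"
      using pick[OF ne] \<open>(u, d1 m ?e) \<in> cand ?f (ecol ?e) (etgt ?e)\<close> by force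
    then have "(v, fst (pick (cand ?f (ecol ?e) (etgt ?e)))) \<in> R"
      using um(2) tp unfolding total_preorder_on_def by blast
    ultimately show ?case using x'eq by (metis prod.collapse)
  qed
  define P where "P es \<longleftrightarrow> (\<exists>u. (v,u) \<in> R \<and> cons1 u es \<and> map ecol es = map (\<lambda>i. ecol (w i)) [0..<length es])" for es
  have B: "\<exists>es. length es = k \<and> P es" for k
  proof -
    obtain u m where um: "Fx (map w [0..<k]) (esrc (w k)) = Some (u,m)" "(v,u) \<in> R" using A by blast
    then obtain es' where "cons1 u es'" "map ecol es' = map ecol (map w [0..<k])"
      using Fx_inv[OF wV(1) um(1)] by blast
    moreover then have "length es' = k" by (metis length_map length_upt minus_nat.diff_0)
    ultimately show ?thesis unfolding P_def using um(2) by (auto intro!: exI[of _ es'])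
  qed
  have pre: "P xs" if Pxy: "P (xs @ ys)" for xs ys
  proof -
    obtain u where u: "(v,u) \<in> R" "cons1 u (xs@ys)" "map ecol (xs@ys) = map (\<lambda>i. ecol (w i)) [0..<length (xs@ys)]"
      using Pxy unfolding P_def by blast
    have "map ecol xs = take (length xs) (map ecol (xs@ys))" by simp
    also have "\<dots> = map (\<lambda>i. ecol (w i)) [0..<length xs]" using u(3) by (simp add: take_map)
    finally show ?thesis unfolding P_def using u cons1_prefix by blast
  qed
  have sub: "set xs \<subseteq> E" if "P xs" for xs
    using that unfolding P_def cons1_def fpath_def by auto
  have finE: "finite E" using ar unfolding arena_def by auto
  have "\<exists>g. \<forall>k. P (map g [0..<k])"
    apply (rule konig[of E P])
       apply (rule finE)
      apply (rule B)
     apply (erule pre)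
    apply (erule sub)
    done
  then obtain g where g: "\<And>k. P (map g [0..<k])" by blast
  define u where "u = esrc (g 0)"
  have Pk: "\<exists>u'. (v,u') \<in> R \<and> cons1 u' (map g [0..<k]) \<and> map ecol (map g [0..<k]) = map (\<lambda>i. ecol (w i)) [0..<k]" for k
    using g[of k] unfolding P_def by simp
  have cu: "(v,u) \<in> R \<and> cons1 u (map g [0..<Suc k])" for k
  proof -
    obtain u' where u': "(v,u') \<in> R" "cons1 u' (map g [0..<Suc k])" using Pk by blast
    then have "fpath V E (u', map g [0..<Suc k])" unfolding cons1_def by blast
    then have "esrc (hd (map g [0..<Suc k])) = u'" unfolding fpath_def by (simp del: upt_Suc)
    moreover have "hd (map g [0..<Suc k]) = g 0" by (simp add: upt_conv_Cons del: upt_Suc)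
    ultimately have "u' = u" unfolding u_def by simp
    then show ?thesis using u' by simp
  qed
  have uV: "u \<in> V" using cu[of 0] unfolding cons1_def fpath_def by simp
  have "ipath E u g"
    unfolding ipath_def
  proof (intro conjI allI)
    show "esrc (g 0) = u" by (simp add: u_def)
    fix i
    show "g i \<in> E" using cu[of i] unfolding cons1_def fpath_def by auto
    have "fpath V E (u, map g [0..<Suc (Suc i)])" using cu[of "Suc i"] unfolding cons1_def by simp
    then have "etgt (map g [0..<Suc (Suc i)] ! i) = esrc (map g [0..<Suc (Suc i)] ! Suc i)"
      unfolding fpath_def by (simp del: upt_Suc)
    then show "etgt (g i) = esrc (g (Suc i))" by (simp del: upt_Suc)
  qed
  moreover have "consistent V0 S1 u g"
    unfolding consistent_def
  proof (intro conjI allI impI)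
    show "g 0 = S1 (u, [])" if "u \<in> V0" using cu[of 0] that unfolding cons1_def by simp
    fix i assume "etgt (g i) \<in> V0"
    then have "map g [0..<Suc (Suc i)] ! Suc i = S1 (u, take (Suc i) (map g [0..<Suc (Suc i)]))"
      using cu[of "Suc i"] unfolding cons1_def by (simp del: upt_Suc)
    moreover have "take (Suc i) (map g [0..<Suc (Suc i)]) = map g [0..<Suc i]"
      by (simp add: take_map)
    ultimately show "g (Suc i) = S1 (u, map g [0..<Suc i])" by (simp del: upt_Suc)
  qed
  moreover have "ecol (w i) = ecol (g i)" for i
  proof -
    obtain u' where "map ecol (map g [0..<Suc i]) = map (\<lambda>i. ecol (w i)) [0..<Suc i]" using Pk by blast
    then have "map ecol (map g [0..<Suc i]) ! i = map (\<lambda>i. ecol (w i)) [0..<Suc i] ! i" by (rule arg_cong)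
    then show ?thesis by (simp del: upt_Suc)
  qed
  ultimately have "(\<lambda>i. ecol (w i)) \<in> cols V0 E S1 u" unfolding cols_def by auto
  then show ?thesis using uV cu[of 0] by blast
qed

end
theorem theorem2:
  fixes V V0 V1 :: "'v set" and E :: "('v,'c) edge set" and n q :: nat
    and R :: "('v \<times> 'v) set" and S1 :: "'v \<times> ('v,'c) edge list \<Rightarrow> ('v,'c) edge"
  assumes "0 < n" and "0 < q"
    and "arena V V0 V1 E" and "card V = n"
    and "total_preorder_on V R"
    and "q_state_strategy V V0 E q S1"
  shows "\<exists>S2. chromatic_q_state_strategy V V0 E ((q * n + 1) ^ n) S2 \<and>
           (\<forall>v\<in>V. cols V0 E S2 v \<subseteq> (\<Union>u\<in>{u\<in>V. (v,u) \<in> R}. cols V0 E S1 u))"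
proof -
  obtain M1 :: "nat set" and m0 d1 where ms: "memory_structure E M1 m0 d1" and cM: "card M1 = q"
    and mstr: "mem_strategy V V0 E m0 d1 S1"
    using assms(6) unfolding q_state_strategy_def by blast
  interpret T: tctx V V0 V1 E R S1 M1 m0 d1
    using assms(3,5) ms mstr by unfold_locales
  define N where "N = card T.FS"
  obtain h where bij: "bij_betw h {0..<N} T.FS"
    using ex_bij_betw_nat_finite[OF T.finFS] unfolding N_def by blast
  define enc where "enc = inv_into {0..<N} h"
  have encM: "enc f \<in> {0..<N}" if "f \<in> T.FS" for f
    using bij_betw_inv_into[OF bij] that unfolding enc_def bij_betw_def by blast
  have hEnc: "h (enc f) = f" if "f \<in> T.FS" for f
    using bij_betw_inv_into_right[OF bij that] unfolding enc_def .
  define d2 :: "nat \<Rightarrow> ('v,'c) edge \<Rightarrow> nat" where "d2 k e = enc (T.upd (h k) (ecol e))" for k e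
  define k0 where "k0 = enc T.f0"
  have dext: "delta_ext d2 k0 es = enc (T.Fx es)" for es :: "('v,'c) edge list"
  proof (induction es rule: rev_induct)
    case Nil then show ?case by (simp add: delta_ext_def k0_def T.Fx_Nil)
  next
    case (snoc e es)
    have "delta_ext d2 k0 (es @ [e]) = d2 (delta_ext d2 k0 es) e" by (simp add: delta_ext_def)
    also have "\<dots> = d2 (enc (T.Fx es)) e" by (simp only: snoc.IH)
    also have "\<dots> = enc (T.upd (T.Fx es) (ecol e))" unfolding d2_def using hEnc[OF T.Fx_FS] by simp
    finally show ?case by (simp add: T.Fx_snoc)
  qed
  define S2 where "S2 p = T.stratf (T.Fx (snd p)) (ptgt p)" for p
  have "chromatic_q_state_strategy V V0 E ((q * n + 1) ^ n) S2"
    unfolding chromatic_q_state_strategy_def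
  proof (intro exI conjI)
    show "memory_structure E {0..<N} k0 d2"
      unfolding memory_structure_def d2_def k0_def using encM T.upd_FS T.f0_FS by auto
    show "card {0..<N} = (q * n + 1) ^ n" using T.cardFS cM assms(4) unfolding N_def by simp
    show "chromatic E {0..<N} d2" unfolding chromatic_def d2_def
      by (rule exI[of _ "\<lambda>k c. enc (T.upd (h k) c)"]) simp
    show "mem_strategy V V0 E k0 d2 S2"
      unfolding mem_strategy_def
    proof (rule conjI)
      show "strategy V V0 E S2" unfolding strategy_def
      proof (intro allI impI)
        fix p assume "fpath V E p \<and> ptgt p \<in> V0"
        then show "S2 p \<in> E \<and> esrc (S2 p) = ptgt p" using T.stratf_ok unfolding S2_def by blast
      qed
    next
      show "\<forall>p1 p2. fpath V E p1 \<and> fpath V E p2 \<and> ptgt p1 = ptgt p2 \<and> ptgt p1 \<in> V0 \<and>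
        delta_ext d2 k0 (snd p1) = delta_ext d2 k0 (snd p2) \<longrightarrow> S2 p1 = S2 p2"
      proof (intro allI impI)
      fix p1 p2 :: "'v \<times> ('v,'c) edge list"
      assume a: "fpath V E p1 \<and> fpath V E p2 \<and> ptgt p1 = ptgt p2 \<and> ptgt p1 \<in> V0 \<and>
        delta_ext d2 k0 (snd p1) = delta_ext d2 k0 (snd p2)"
      then have "enc (T.Fx (snd p1)) = enc (T.Fx (snd p2))" by (simp add: dext)
      then have "h (enc (T.Fx (snd p1))) = h (enc (T.Fx (snd p2)))" by simp
      then have "T.Fx (snd p1) = T.Fx (snd p2)" using hEnc[OF T.Fx_FS] by simp
      then show "S2 p1 = S2 p2" using a unfolding S2_def by simp
      qed
    qed
  qed
  moreover have "\<forall>v\<in>V. cols V0 E S2 v \<subseteq> (\<Union>u\<in>{u\<in>V. (v,u) \<in> R}. cols V0 E S1 u)"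
  proof (intro ballI subsetI)
    fix v x assume vV: "v \<in> V" and x: "x \<in> cols V0 E S2 v"
    then obtain w where w: "x = (\<lambda>i. ecol (w i))" "ipath E v w" "consistent V0 S2 v w"
      unfolding cols_def by blast
    have "consistent V0 (\<lambda>p. T.stratf (T.Fx (snd p)) (ptgt p)) v w"
      using w(3) unfolding S2_def[abs_def] .
    then show "x \<in> (\<Union>u\<in>{u\<in>V. (v,u) \<in> R}. cols V0 E S1 u)"
      using T.play[OF vV w(2)] w(1) by simp
  qed
  ultimately show ?thesis by blast
qed


end
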